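(* Let $k\ge 1$ be an integer, let $g,h$ be any two encoders and $\mathcal D$ any task distribution. With the $k$-negative losses defined below, $$L^{(k)}_{\mathrm{con}}(g;\mathcal D)\le \alpha L^{(k)}_{\mathrm{con}}(h;\mathcal D)+L^{(k)}_{\mathrm{dis}}(g;h,\mathcal D)+\beta,$$ $$L^{(k)}_{\mathrm{con}}(g;\mathcal D)\ge \alpha L^{(k)}_{\mathrm{con}}(h;\mathcal D)+L^{(k)}_{\mathrm{dis}}(g;h,\mathcal D)+\beta',$$ where $\alpha=\frac{2e^2}{k+e^2}$, $\beta=2-\alpha+\alpha\log\frac{\alpha}{2}$ and $\beta'=-\alpha\log(1+ke^2)-\frac{2ke^2}{1+ke^2}$.
   Context: Let $\mathcal X$ be a measurable input space and $d\ge 1$. An encoder is a measurable map $f:\mathcal X\to\mathbb R^d$ with $\|f(x)\|_2=1$ for all $x$. A task distribution $\mathcal D$ consists of a probability distribution $\mu$ on a countable set of classes together with, for each class $c$, a probability distribution $\mathcal D_c$ on $\mathcal X$. $k$-negative sampling scheme: $c^+,c_1^-,\dots,c_k^-\sim\mu$ independently; given $c^+$, $x,x^+$ are drawn i.i.d. from $\mathcal D_{c^+}$; independently, $x_i^-\sim\mathcal D_{c_i^-}$ for $i=1,\dots,k$. For $\mathbf v\in\mathbb R^k$ let $\ell(\mathbf v)=\log\big(1+\sum_{i=1}^k e^{-v_i}\big)$. The $k$-negative contrastive loss is $L^{(k)}_{\mathrm{con}}(f;\mathcal D)=\mathbb E\big[\ell\big((f(x)^\top(f(x^+)-f(x_i^-)))_{i=1}^k\big)\big]$.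 Let $\mathbf p(f;x,x^+,x_1^-,\dots,x_k^-)=\mathrm{softmax}\big(f(x)^\top f(x^+),f(x)^\top f(x_1^-),\dots,f(x)^\top f(x_k^-)\big)\in\mathbb R^{k+1}$, and for encoders $g,h$ let $L^{(k)}_{\mathrm{dis}}(g;h,\mathcal D)=\mathbb E\big[-\mathbf p(h;x,x^+,x_1^-,\dots,x_k^-)\cdot\log\mathbf p(g;x,x^+,x_1^-,\dots,x_k^-)\big]$ under the same sampling scheme. *)

theory Defs
  imports "HOL-Probability.Probability"
begin

definition encoder :: "'x measure \<Rightarrow> ('x \<Rightarrow> real ^ 'd) \<Rightarrow> bool" where
  "encoder M f \<longleftrightarrow> f \<in> M \<rightarrow>\<^sub>M borel \<and> (\<forall>x\<in>space M. norm (f x) = 1)"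

definition task_distribution :: "'x measure \<Rightarrow> 'c pmf \<Rightarrow> ('c \<Rightarrow> 'x measure) \<Rightarrow> bool" where
  "task_distribution M \<mu> D \<longleftrightarrow> (\<forall>c. prob_space (D c) \<and> sets (D c) = sets M)"

text \<open>k-negative sampling scheme: c+, c1-,...,ck- iid from mu; x, x+ iid from D c+;
  x_i- from D c_i-, independently. Outcome: ((x, x+), (i \<mapsto> x_i-)).\<close>
definition sampling :: "'x measure \<Rightarrow> 'c pmf \<Rightarrow> ('c \<Rightarrow> 'x measure) \<Rightarrow> nat
    \<Rightarrow> (('x \<times> 'x) \<times> (nat \<Rightarrow> 'x)) measure" where
  "sampling M \<mu> D k =
     measure_pmf (pair_pmf \<mu> (Pi_pmf {..<k} undefined (\<lambda>_. \<mu>))) \<bind>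
       (\<lambda>(cp, cn). (D cp \<Otimes>\<^sub>M D cp) \<Otimes>\<^sub>M (\<Pi>\<^sub>M i\<in>{..<k}. D (cn i)))"

definition ell :: "nat \<Rightarrow> (nat \<Rightarrow> real) \<Rightarrow> real" where
  "ell k v = ln (1 + (\<Sum>i<k. exp (- v i)))"

definition L_con :: "'x measure \<Rightarrow> 'c pmf \<Rightarrow> ('c \<Rightarrow> 'x measure) \<Rightarrow> nat
    \<Rightarrow> ('x \<Rightarrow> real ^ 'd) \<Rightarrow> real" where
  "L_con M \<mu> D k f =
     (\<integral>((x, xp), xn). ell k (\<lambda>i. f x \<bullet> (f xp - f (xn i))) \<partial>sampling M \<mu> D k)"

definition logits :: "('x \<Rightarrow> real ^ 'd) \<Rightarrow> 'x \<Rightarrow> 'x \<Rightarrow> (nat \<Rightarrow> 'x) \<Rightarrow> nat \<Rightarrow> real" where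
  "logits f x xp xn j = (if j = 0 then f x \<bullet> f xp else f x \<bullet> f (xn (j - 1)))"

definition softmax_p :: "nat \<Rightarrow> ('x \<Rightarrow> real ^ 'd) \<Rightarrow> 'x \<Rightarrow> 'x \<Rightarrow> (nat \<Rightarrow> 'x) \<Rightarrow> nat \<Rightarrow> real" where
  "softmax_p k f x xp xn j =
     exp (logits f x xp xn j) / (\<Sum>l\<le>k. exp (logits f x xp xn l))"

definition L_dis :: "'x measure \<Rightarrow> 'c pmf \<Rightarrow> ('c \<Rightarrow> 'x measure) \<Rightarrow> nat
    \<Rightarrow> ('x \<Rightarrow> real ^ 'd) \<Rightarrow> ('x \<Rightarrow> real ^ 'd) \<Rightarrow> real" where
  "L_dis M \<mu> D k g h =
     (\<integral>((x, xp), xn). - (\<Sum>j\<le>k. softmax_p k h x xp xn j * ln (softmax_p k g x xp xn j))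
        \<partial>sampling M \<mu> D k)"

end

theory Submission
  imports Defs
begin

lemma shift_sum: "(\<Sum>j\<le>k. f j) = f 0 + (\<Sum>i<k. f (Suc i))" for f :: "nat \<Rightarrow> real"
  by (induction k) (auto simp: sum.atMost_Suc sum.lessThan_Suc)

lemma alg:
  fixes a b :: "nat \<Rightarrow> real" and k :: nat
  assumes ha: "\<And>i. i < k \<Longrightarrow> \<bar>a (Suc i) - a 0\<bar> \<le> 2"
    and hb: "\<And>i. i < k \<Longrightarrow> \<bar>b (Suc i) - b 0\<bar> \<le> 2"
  defines "Za \<equiv> (\<Sum>j\<le>k. exp (a j))" and "Zb \<equiv> (\<Sum>j\<le>k. exp (b j))"
  defines "Fg \<equiv> ln (1 + (\<Sum>i<k. exp (- (a 0 - a (Suc i)))))"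
    and "Fh \<equiv> ln (1 + (\<Sum>i<k. exp (- (b 0 - b (Suc i)))))"
    and "Dis \<equiv> - (\<Sum>j\<le>k. exp (b j) / Zb * ln (exp (a j) / Za))"
  defines "\<alpha> \<equiv> 2 * exp 2 / (real k + exp 2)"
  defines "\<beta> \<equiv> 2 - \<alpha> + \<alpha> * ln (\<alpha> / 2)"
  defines "\<beta>' \<equiv> - \<alpha> * ln (1 + real k * exp 2) - 2 * real k * exp 2 / (1 + real k * exp 2)"
  shows "Fg \<le> \<alpha> * Fh + Dis + \<beta> \<and> Fg \<ge> \<alpha> * Fh + Dis + \<beta>'
     \<and> \<bar>Fg\<bar> \<le> real k * exp 2 + 2 \<and> \<bar>Fh\<bar> \<le> real k * exp 2 + 2 \<and> \<bar>Dis\<bar> \<le> real k * exp 2 + 2"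
proof -
  have Za_pos: "Za > 0" unfolding Za_def by (intro sum_pos) auto
  have Zb_pos: "Zb > 0" unfolding Zb_def by (intro sum_pos) auto
  have Za_sh: "Za = exp (a 0) + (\<Sum>i<k. exp (a (Suc i)))" unfolding Za_def by (rule shift_sum)
  have Zb_sh: "Zb = exp (b 0) + (\<Sum>i<k. exp (b (Suc i)))" unfolding Zb_def by (rule shift_sum)
  have F_eq: "ln (1 + (\<Sum>i<k. exp (- (c 0 - c (Suc i))))) = ln (\<Sum>j\<le>k. exp (c j)) - c 0"
    for c :: "nat \<Rightarrow> real"
  proof -
    have "1 + (\<Sum>i<k. exp (- (c 0 - c (Suc i)))) = (\<Sum>j\<le>k. exp (c j)) / exp (c 0)"
      by (simp add: shift_sum add_divide_distrib sum_divide_distrib exp_diff)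
    moreover have "(\<Sum>j\<le>k. exp (c j)) > 0" by (intro sum_pos) auto
    ultimately show ?thesis by (simp add: ln_div)
  qed
  have hFg: "Fg = ln Za - a 0" unfolding Fg_def Za_def by (rule F_eq)
  have hFh: "Fh = ln Zb - b 0" unfolding Fh_def Zb_def by (rule F_eq)
  define p where "p j = exp (b j) / Zb" for j
  have psum: "(\<Sum>j\<le>k. p j) = 1" unfolding p_def using Zb_pos
    by (simp add: sum_divide_distrib[symmetric] Zb_def)
  have ppos: "p j > 0" for j unfolding p_def using Zb_pos by simp
  have hD: "Dis = ln Za - (\<Sum>j\<le>k. p j * a j)"
  proof -
    have "Dis = - (\<Sum>j\<le>k. p j * a j - p j * ln Za)"
      unfolding Dis_def p_def[symmetric] using Za_pos
      by (intro arg_cong[where f=uminus] sum.cong) (auto simp: ln_div algebra_simps)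
    also have "\<dots> = ln Za * (\<Sum>j\<le>k. p j) - (\<Sum>j\<le>k. p j * a j)"
      by (simp add: sum_subtractf sum_distrib_left mult.commute)
    finally show ?thesis using psum by simp
  qed
  define S where "S = (\<Sum>i<k. p (Suc i) * (a (Suc i) - a 0))"
  have hS: "(\<Sum>j\<le>k. p j * a j) - a 0 = S"
  proof -
    have "(\<Sum>j\<le>k. p j * a j) - a 0 = (\<Sum>j\<le>k. p j * a j) - (\<Sum>j\<le>k. p j) * a 0"
      using psum by simp
    also have "\<dots> = (\<Sum>j\<le>k. p j * (a j - a 0))"
      by (simp add: sum_distrib_right sum_distrib_left sum_subtractf algebra_simps)
    also have "\<dots> = S" unfolding S_def by (subst shift_sum) simp
    finally show ?thesis .
  qed
  have p0: "1 - p 0 = (\<Sum>i<k. p (Suc i))" using psum by (subst (asm) shift_sum) simp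
  have Sabs: "\<bar>S\<bar> \<le> 2 * (1 - p 0)"
  proof -
    have "\<bar>S\<bar> \<le> (\<Sum>i<k. \<bar>p (Suc i) * (a (Suc i) - a 0)\<bar>)" unfolding S_def by (rule sum_abs)
    also have "\<dots> \<le> (\<Sum>i<k. p (Suc i) * 2)"
    proof (intro sum_mono)
      fix i assume "i \<in> {..<k}"
      then have "\<bar>a (Suc i) - a 0\<bar> \<le> 2" using ha by auto
      then show "\<bar>p (Suc i) * (a (Suc i) - a 0)\<bar> \<le> p (Suc i) * 2"
        using ppos[of "Suc i"] by (simp add: abs_mult mult_left_mono)
    qed
    also have "\<dots> = 2 * (1 - p 0)" using p0 by (simp add: sum_distrib_right[symmetric])
    finally show ?thesis .
  qed
  have lnp0: "ln (p 0) = b 0 - ln Zb" unfolding p_def using Zb_pos by (simp add: ln_div)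
  have key: "Fg - \<alpha> * Fh - Dis = S + \<alpha> * ln (p 0)"
  proof -
    have e1: "Fh = - ln (p 0)" using hFh lnp0 by simp
    show ?thesis using hFg hD hS by (simp add: e1 algebra_simps)
  qed
  have E: "exp 2 > (0::real)" by simp
  have kE: "real k * exp 2 \<ge> 0" by simp
  have alpha_pos: "\<alpha> > 0" unfolding \<alpha>_def by (simp add: add_nonneg_pos)
  have p0le: "p 0 \<le> 1" using p0 ppos by (smt (verit) sum_nonneg less_imp_le)
  have Zb_le: "Zb \<le> exp (b 0) * (1 + real k * exp 2)"
  proof -
    have "(\<Sum>i<k. exp (b (Suc i))) \<le> (\<Sum>i<k. exp (b 0) * exp 2)"
    proof (intro sum_mono)
      fix i assume "i \<in> {..<k}"
      then have "b (Suc i) \<le> b 0 + 2" using hb by fastforce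
      then show "exp (b (Suc i)) \<le> exp (b 0) * exp 2" by (simp add: exp_add[symmetric])
    qed
    then show ?thesis using Zb_sh by (simp add: algebra_simps)
  qed
  have p0ge: "p 0 \<ge> 1 / (1 + real k * exp 2)"
  proof -
    have pos1: "1 + real k * exp 2 > 0" using kE by linarith
    have "exp (b 0) / Zb \<ge> exp (b 0) / (exp (b 0) * (1 + real k * exp 2))"
      using Zb_pos Zb_le pos1 by (intro divide_left_mono) auto
    then show ?thesis unfolding p_def by simp
  qed
  have up: "S + \<alpha> * ln (p 0) \<le> \<beta>"
  proof -
    have "ln (p 0 / (\<alpha>/2)) \<le> p 0 / (\<alpha>/2) - 1"
      using ppos alpha_pos by (intro ln_le_minus_one) simp
    moreover have "ln (p 0 / (\<alpha>/2)) = ln (p 0) - ln (\<alpha>/2)"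
      by (rule ln_divide_pos) (use ppos alpha_pos in auto)
    ultimately have "ln (p 0) - ln (\<alpha>/2) \<le> p 0 / (\<alpha>/2) - 1" by linarith
    then have "\<alpha> * (ln (p 0) - ln (\<alpha>/2)) \<le> \<alpha> * (p 0 / (\<alpha>/2) - 1)"
      using alpha_pos by (intro mult_left_mono) auto
    also have "\<alpha> * (p 0 / (\<alpha>/2) - 1) = 2 * p 0 - \<alpha>" using alpha_pos by (simp add: field_simps)
    finally show ?thesis using Sabs unfolding \<beta>_def by (simp add: algebra_simps)
  qed
  have low: "S + \<alpha> * ln (p 0) \<ge> \<beta>'"
  proof -
    have pos1: "1 + real k * exp 2 > 0" using kE by linarith
    have "ln (p 0) \<ge> ln (1 / (1 + real k * exp 2))"
      using p0ge pos1 ppos[of 0] by (subst ln_le_cancel_iff) auto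
    then have l1: "ln (p 0) \<ge> - ln (1 + real k * exp 2)" using pos1 by (simp add: ln_div)
    have l2: "-2 * (1 - p 0) \<ge> - 2 * real k * exp 2 / (1 + real k * exp 2)"
    proof -
      have "1 - p 0 \<le> 1 - 1 / (1 + real k * exp 2)" using p0ge by simp
      also have "\<dots> = real k * exp 2 / (1 + real k * exp 2)" using pos1 by (simp add: field_simps)
      finally show ?thesis by simp
    qed
    have "\<alpha> * ln (p 0) \<ge> \<alpha> * (- ln (1 + real k * exp 2))"
      using l1 alpha_pos by (intro mult_left_mono) auto
    then show ?thesis using Sabs l2 unfolding \<beta>'_def by (simp add: algebra_simps)
  qed
  have Fbound: "0 \<le> ln (\<Sum>j\<le>k. exp (c j)) - c 0 \<and> ln (\<Sum>j\<le>k. exp (c j)) - c 0 \<le> real k * exp 2"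
    if hc: "\<And>i. i < k \<Longrightarrow> \<bar>c (Suc i) - c 0\<bar> \<le> 2" for c :: "nat \<Rightarrow> real"
  proof -
    define Z where "Z = (\<Sum>j\<le>k. exp (c j))"
    have Zsh: "Z = exp (c 0) + (\<Sum>i<k. exp (c (Suc i)))" unfolding Z_def by (rule shift_sum)
    have Zge: "Z \<ge> exp (c 0)" using Zsh by (simp add: sum_nonneg)
    have "(\<Sum>i<k. exp (c (Suc i))) \<le> (\<Sum>i<k. exp (c 0) * exp 2)"
    proof (intro sum_mono)
      fix i assume "i \<in> {..<k}"
      then have "c (Suc i) \<le> c 0 + 2" using hc by fastforce
      then show "exp (c (Suc i)) \<le> exp (c 0) * exp 2" by (simp add: exp_add[symmetric])
    qed
    then have Zle: "Z \<le> exp (c 0) * (1 + real k * exp 2)" using Zsh by (simp add: algebra_simps)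
    have Zpos: "Z > 0" using Zge by (smt (verit) exp_gt_zero)
    have "ln Z \<ge> ln (exp (c 0))" using Zge Zpos by (subst ln_le_cancel_iff) auto
    moreover have "ln Z \<le> ln (exp (c 0) * (1 + real k * exp 2))"
      using Zle Zpos kE by (subst ln_le_cancel_iff) auto
    moreover have "ln (exp (c 0) * (1 + real k * exp 2)) = c 0 + ln (1 + real k * exp 2)"
    proof -
      have pos: "1 + real k * exp 2 > 0" using kE by linarith
      then show ?thesis by (simp add: ln_mult)
    qed
    moreover have "ln (1 + real k * exp 2) \<le> real k * exp 2"
      using kE by (smt (verit) ln_le_minus_one)
    ultimately show ?thesis unfolding Z_def by simp
  qed
  have bFg: "\<bar>Fg\<bar> \<le> real k * exp 2" using Fbound[of a] ha hFg Za_def by auto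
  have bFh: "\<bar>Fh\<bar> \<le> real k * exp 2" using Fbound[of b] hb hFh Zb_def by auto
  have "Dis = Fg - S" using hD hFg hS by simp
  then have bD: "\<bar>Dis\<bar> \<le> real k * exp 2 + 2" using bFg Sabs ppos[of 0] by simp
  show ?thesis using key up low bFg bFh bD by simp
qed

lemma logits_meas:
  fixes g :: "'x \<Rightarrow> real ^ 'd"
  assumes g[measurable]: "g \<in> M \<rightarrow>\<^sub>M borel" and j: "j \<le> k"
  shows "(\<lambda>((x, xp), xn). logits g x xp xn j) \<in> borel_measurable ((M \<Otimes>\<^sub>M M) \<Otimes>\<^sub>M (\<Pi>\<^sub>M i\<in>{..<k}. M))"
proof (cases j)
  case 0
  then show ?thesis by (simp add: logits_def case_prod_beta') measurable
next
  case (Suc i)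
  then have i: "i \<in> {..<k}" using j by auto
  show ?thesis using Suc by (simp add: logits_def case_prod_beta') (measurable, rule i)
qed

lemma ell_meas:
  fixes g :: "'x \<Rightarrow> real ^ 'd"
  assumes g[measurable]: "g \<in> M \<rightarrow>\<^sub>M borel"
  shows "(\<lambda>((x, xp), xn). ell k (\<lambda>i. g x \<bullet> (g xp - g (xn i)))) \<in> borel_measurable ((M \<Otimes>\<^sub>M M) \<Otimes>\<^sub>M (\<Pi>\<^sub>M i\<in>{..<k}. M))"
  unfolding ell_def case_prod_beta' by measurable

lemma dis_meas:
  fixes g h :: "'x \<Rightarrow> real ^ 'd"
  assumes g[measurable]: "g \<in> M \<rightarrow>\<^sub>M borel"  assumes h[measurable]: "h \<in> M \<rightarrow>\<^sub>M borel"
  shows "(\<lambda>((x, xp), xn). - (\<Sum>j\<le>k. softmax_p k h x xp xn j * ln (softmax_p k g x xp xn j))) \<in> borel_measurable ((M \<Otimes>\<^sub>M M) \<Otimes>\<^sub>M (\<Pi>\<^sub>M i\<in>{..<k}. M))"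
proof -
  note [measurable] = logits_meas[OF g, unfolded case_prod_beta'] logits_meas[OF h, unfolded case_prod_beta']
  show ?thesis unfolding softmax_p_def case_prod_beta' by measurable
qed

lemma inner_bound:
  fixes u v w :: "real ^ 'd"
  assumes "norm u = 1" "norm v = 1" "norm w = 1"
  shows "\<bar>u \<bullet> w - u \<bullet> v\<bar> \<le> 2"
proof -
  have "\<bar>u \<bullet> w\<bar> \<le> 1" using Cauchy_Schwarz_ineq2[of u w] assms by simp
  moreover have "\<bar>u \<bullet> v\<bar> \<le> 1" using Cauchy_Schwarz_ineq2[of u v] assms by simp
  ultimately show ?thesis by linarith
qed

lemma pointwise:
  fixes g h :: "'x \<Rightarrow> real ^ 'd" and k :: nat
  assumes ng: "norm (g x) = 1" "norm (g xp) = 1" "\<And>i. i < k \<Longrightarrow> norm (g (xn i)) = 1"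
    and nh: "norm (h x) = 1" "norm (h xp) = 1" "\<And>i. i < k \<Longrightarrow> norm (h (xn i)) = 1"
  defines "\<alpha> \<equiv> 2 * exp 2 / (real k + exp 2)"
  defines "\<beta> \<equiv> 2 - \<alpha> + \<alpha> * ln (\<alpha> / 2)"
  defines "\<beta>' \<equiv> - \<alpha> * ln (1 + real k * exp 2) - 2 * real k * exp 2 / (1 + real k * exp 2)"
  defines "Fg \<equiv> ell k (\<lambda>i. g x \<bullet> (g xp - g (xn i)))"
    and "Fh \<equiv> ell k (\<lambda>i. h x \<bullet> (h xp - h (xn i)))"
    and "Dis \<equiv> - (\<Sum>j\<le>k. softmax_p k h x xp xn j * ln (softmax_p k g x xp xn j))"
  shows "Fg \<le> \<alpha> * Fh + Dis + \<beta> \<and> Fg \<ge> \<alpha> * Fh + Dis + \<beta>'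
     \<and> \<bar>Fg\<bar> \<le> real k * exp 2 + 2 \<and> \<bar>Fh\<bar> \<le> real k * exp 2 + 2 \<and> \<bar>Dis\<bar> \<le> real k * exp 2 + 2"
proof -
  define a where "a = logits g x xp xn"
  define b where "b = logits h x xp xn"
  have ea: "g x \<bullet> (g xp - g (xn i)) = a 0 - a (Suc i)" for i
    unfolding a_def logits_def by (simp add: inner_diff_right)
  have eb: "h x \<bullet> (h xp - h (xn i)) = b 0 - b (Suc i)" for i
    unfolding b_def logits_def by (simp add: inner_diff_right)
  have ha: "\<bar>a (Suc i) - a 0\<bar> \<le> 2" if "i < k" for i
    unfolding a_def logits_def using inner_bound[OF ng(1,2) ng(3)[OF that]] by simp
  have hb: "\<bar>b (Suc i) - b 0\<bar> \<le> 2" if "i < k" for i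
    unfolding b_def logits_def using inner_bound[OF nh(1,2) nh(3)[OF that]] by simp
  have "Fg = ln (1 + (\<Sum>i<k. exp (- (a 0 - a (Suc i)))))"
    unfolding Fg_def ell_def ea by simp
  moreover have "Fh = ln (1 + (\<Sum>i<k. exp (- (b 0 - b (Suc i)))))"
    unfolding Fh_def ell_def eb by simp
  moreover have "Dis = - (\<Sum>j\<le>k. exp (b j) / (\<Sum>j\<le>k. exp (b j)) * ln (exp (a j) / (\<Sum>j\<le>k. exp (a j))))"
    unfolding Dis_def softmax_p_def a_def b_def ..
  ultimately show ?thesis
    using alg[of k a b, OF ha hb] unfolding \<alpha>_def \<beta>_def \<beta>'_def by simp
qed

theorem mainTheorem5:
  fixes M :: "'x measure" and \<mu> :: "'c pmf" and D :: "'c \<Rightarrow> 'x measure"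
    and g h :: "'x \<Rightarrow> real ^ 'd" and k :: nat
  assumes "k \<ge> 1"
    and "encoder M g" and "encoder M h"
    and "task_distribution M \<mu> D"
  defines "\<alpha> \<equiv> 2 * exp 2 / (real k + exp 2)"
  defines "\<beta> \<equiv> 2 - \<alpha> + \<alpha> * ln (\<alpha> / 2)"
  defines "\<beta>' \<equiv> - \<alpha> * ln (1 + real k * exp 2) - 2 * real k * exp 2 / (1 + real k * exp 2)"
  shows "L_con M \<mu> D k g \<le> \<alpha> * L_con M \<mu> D k h + L_dis M \<mu> D k g h + \<beta>
       \<and> L_con M \<mu> D k g \<ge> \<alpha> * L_con M \<mu> D k h + L_dis M \<mu> D k g h + \<beta>'"
proof -
  have gm: "g \<in> M \<rightarrow>\<^sub>M borel" and gn: "\<And>x. x \<in> space M \<Longrightarrow> norm (g x) = 1"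
    using assms(2) unfolding encoder_def by auto
  have hm: "h \<in> M \<rightarrow>\<^sub>M borel" and hn: "\<And>x. x \<in> space M \<Longrightarrow> norm (h x) = 1"
    using assms(3) unfolding encoder_def by auto
  have Dp: "\<And>c. prob_space (D c)" and Ds: "\<And>c. sets (D c) = sets M"
    using assms(4) unfolding task_distribution_def by auto
  define N where "N = (M \<Otimes>\<^sub>M M) \<Otimes>\<^sub>M (\<Pi>\<^sub>M i\<in>{..<k}. M)"
  define K where "K = (\<lambda>(cp, cn). (D cp \<Otimes>\<^sub>M D cp) \<Otimes>\<^sub>M (\<Pi>\<^sub>M i\<in>{..<k}. D (cn i)))"
  define P where "P = pair_pmf \<mu> (Pi_pmf {..<k} undefined (\<lambda>_. \<mu>))"
  have samp: "sampling M \<mu> D k = measure_pmf P \<bind> K"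
    unfolding sampling_def K_def P_def ..
  have Ksets: "sets (K z) = sets N" for z
    unfolding K_def N_def case_prod_beta'
    by (intro sets_pair_measure_cong sets_PiM_cong refl Ds)
  have Kprob: "prob_space (K z)" for z
    unfolding K_def case_prod_beta'
    by (intro prob_space_pair prob_space_PiM Dp)
  have Kmeas: "K \<in> measure_pmf P \<rightarrow>\<^sub>M subprob_algebra N"
  proof -
    have "K \<in> count_space UNIV \<rightarrow>\<^sub>M subprob_algebra N"
      using Ksets Kprob by (auto simp: space_subprob_algebra prob_space_imp_subprob_space)
    then show ?thesis by (subst measurable_cong_sets[of _ "count_space UNIV" _ "subprob_algebra N"]) auto
  qed
  interpret S: prob_space "sampling M \<mu> D k"
    unfolding samp
    by (rule prob_space.prob_space_bind[OF prob_space_measure_pmf _ Kmeas]) (simp add: Kprob)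
  have Ssets: "sets (sampling M \<mu> D k) = sets N"
    unfolding samp by (rule sets_bind_measurable[OF Kmeas]) simp
  have Sspace: "space (sampling M \<mu> D k) = space N"
    unfolding samp by (rule space_bind_measurable[OF Kmeas]) simp
  have mcong: "borel_measurable (sampling M \<mu> D k) = borel_measurable N"
    by (rule measurable_cong_sets[OF Ssets refl])
  define Fg where "Fg = (\<lambda>((x, xp), xn). ell k (\<lambda>i. g x \<bullet> (g xp - g (xn i))))"
  define Fh where "Fh = (\<lambda>((x, xp), xn). ell k (\<lambda>i. h x \<bullet> (h xp - h (xn i))))"
  define Dis where "Dis = (\<lambda>((x, xp), xn). - (\<Sum>j\<le>k. softmax_p k h x xp xn j * ln (softmax_p k g x xp xn j)))"
  have LG: "L_con M \<mu> D k g = integral\<^sup>L (sampling M \<mu> D k) Fg" unfolding L_con_def Fg_def ..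
  have LH: "L_con M \<mu> D k h = integral\<^sup>L (sampling M \<mu> D k) Fh" unfolding L_con_def Fh_def ..
  have LD: "L_dis M \<mu> D k g h = integral\<^sup>L (sampling M \<mu> D k) Dis" unfolding L_dis_def Dis_def ..
  have pw: "Fg \<omega> \<le> \<alpha> * Fh \<omega> + Dis \<omega> + \<beta> \<and> Fg \<omega> \<ge> \<alpha> * Fh \<omega> + Dis \<omega> + \<beta>'
     \<and> \<bar>Fg \<omega>\<bar> \<le> real k * exp 2 + 2 \<and> \<bar>Fh \<omega>\<bar> \<le> real k * exp 2 + 2 \<and> \<bar>Dis \<omega>\<bar> \<le> real k * exp 2 + 2"
    if "\<omega> \<in> space (sampling M \<mu> D k)" for \<omega>
  proof -
    obtain x xp xn where om: "\<omega> = ((x, xp), xn)" by (metis prod.collapse)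
    have "\<omega> \<in> space N" using that Sspace by simp
    then have xs: "x \<in> space M" "xp \<in> space M" "\<And>i. i < k \<Longrightarrow> xn i \<in> space M"
      unfolding N_def om by (auto simp: space_pair_measure space_PiM)
    show ?thesis unfolding om Fg_def Fh_def Dis_def case_prod_conv \<alpha>_def \<beta>_def \<beta>'_def
      by (rule pointwise) (use xs gn hn in auto)
  qed
  have FgM: "Fg \<in> borel_measurable (sampling M \<mu> D k)"
    unfolding mcong Fg_def N_def by (rule ell_meas[OF gm])
  have FhM: "Fh \<in> borel_measurable (sampling M \<mu> D k)"
    unfolding mcong Fh_def N_def by (rule ell_meas[OF hm])
  have DisM: "Dis \<in> borel_measurable (sampling M \<mu> D k)"
    unfolding mcong Dis_def N_def by (rule dis_meas[OF gm hm])
  have iG: "integrable (sampling M \<mu> D k) Fg"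
    by (rule S.integrable_const_bound[where B="real k * exp 2 + 2"]) (use pw FgM in auto)
  have iH: "integrable (sampling M \<mu> D k) Fh"
    by (rule S.integrable_const_bound[where B="real k * exp 2 + 2"]) (use pw FhM in auto)
  have iD: "integrable (sampling M \<mu> D k) Dis"
    by (rule S.integrable_const_bound[where B="real k * exp 2 + 2"]) (use pw DisM in auto)
  have "integral\<^sup>L (sampling M \<mu> D k) Fg \<le> integral\<^sup>L (sampling M \<mu> D k) (\<lambda>\<omega>. \<alpha> * Fh \<omega> + Dis \<omega> + \<beta>)"
    by (rule integral_mono) (use iG iH iD pw in auto)
  moreover have "integral\<^sup>L (sampling M \<mu> D k) Fg \<ge> integral\<^sup>L (sampling M \<mu> D k) (\<lambda>\<omega>. \<alpha> * Fh \<omega> + Dis \<omega> + \<beta>')"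
    by (rule integral_mono) (use iG iH iD pw in auto)
  moreover have "integral\<^sup>L (sampling M \<mu> D k) (\<lambda>\<omega>. \<alpha> * Fh \<omega> + Dis \<omega> + c)
      = \<alpha> * integral\<^sup>L (sampling M \<mu> D k) Fh + integral\<^sup>L (sampling M \<mu> D k) Dis + c" for c
    using iH iD by (simp add: S.prob_space)
  ultimately show ?thesis unfolding LG LH LD by simp
qed

end
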